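(* Let $(X;Y,Z)$ be a non-degenerate subwing triple in $\mathcal{C}_n$, and let $Y'\in\mathcal{W}_Y$ and $Z'\in\mathcal{W}_Z$. (i) There are no nonzero $\mathcal{T}$-maps $Z'\to Y'$. (ii) There are no nonzero $\mathcal{T}$-maps $Y'\to Z'$. (iii) There is a nonzero $\mathcal{D}$-map $Z'\to Y'$ if and only if $Z'$ is on the left edge of $\mathcal{W}_Z$ and $Y'$ is on the right edge of $\mathcal{W}_Y$; in this case this map factors through the (nonzero) $\mathcal{D}$-map $Z\to Y$. (iv) There is a nonzero $\mathcal{D}$-map $Y'\to Z'$ if and only if $Z'$ is on the right edge of $\mathcal{W}_Z$, $Y'$ is on the left edge of $\mathcal{W}_Y$, and $\operatorname{ql}X=n-1$; in this case this map factors through the nonzero $\mathcal{D}$-endomorphism of $X$.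
   Context: Let $k$ be algebraically closed, $n\ge2$, $\mathcal{T}_n$ the tube of rank $n$ (finite-dimensional nilpotent representations of the cyclically oriented $\tilde A_{n-1}$-quiver; hereditary, AR-translation $\tau$), $\mathcal{C}_n=D^b(\mathcal{T}_n)/\tau^{-1}[1]$ the cluster tube, with indecomposables identified with those of $\mathcal{T}_n$. Indecomposables have coordinates $(a,b)$, $a\in\mathbb{Z}/n$, $b\ge1$ the quasilength $\operatorname{ql}$, with $\tau(a,b)=(a-1,b)$ and irreducible maps $(a,b)\to(a,b+1)$ and $(a,b)\to(a+1,b-1)$ ($b\ge2$). For indecomposables $X,Y$, $\operatorname{Hom}_{\mathcal{C}_n}(X,Y)=\operatorname{Hom}_{\mathcal{T}_n}(X,Y)\oplus\operatorname{Hom}_{D^b}(X,\tau^{-1}Y[1])$, the second summand $\cong D\operatorname{Hom}_{\mathcal{T}_n}(Y,\tau^2X)$; elements of the first are $\mathcal{T}$-maps, of the second $\mathcal{D}$-maps. For $X=(a,i)$, $i\le n-1$, the wing $\mathcal{W}_X$ is $\{(a+s,i'):s\ge0,i'\ge1,s+i'\le i\}$, with left edge $\{(a,i'):1\le i'\le i\}$ and right edge $\{(a+i-i',i'):1\le i'\le i\}$. A non-degenerate subwing triple $(X;Y,Z)$ consists of $X=(a,b)$ with $3\le b\le n-1$, $Y=(a,c)$ and $Z=(a+c+1,b-c-1)$ for some $1\le c\le b-2$. *)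

theory Defs
  imports "HOL-Computational_Algebra.Polynomial"
begin

text \<open>Concrete model of the tube T_n over a field k.
  An indecomposable is a pair (a,b) :: int * nat, with a normalised modulo n
  (a in {0..<n}) and b = quasilength >= 1.  The module (a,b) has basis
  v_0,...,v_(b-1), v_j sitting at vertex (a+j) mod n; the nilpotent operator
  sends v_j to v_(j-1) and v_0 to 0.  So (a,b) has socle S_a, the
  irreducible maps are (a,b) -> (a,b+1) (mono) and (a,b) -> (a+1,b-1) (epi),
  and tau(a,b) = (a-1,b) (rotation of the quiver; on morphisms tau is the
  identity on matrices).  A morphism (a,b) -> (a',b') is a b' x b matrix
  (entries outside the range are 0) respecting grading and operator.\<close>

type_synonym obj = "int \<times> nat"
type_synonym 'k mat = "nat \<Rightarrow> nat \<Rightarrow> 'k"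

definition obj :: "nat \<Rightarrow> int \<Rightarrow> nat \<Rightarrow> obj" where
  "obj n a b = (a mod int n, b)"

definition ql :: "obj \<Rightarrow> nat" where
  "ql X = snd X"

definition tau2 :: "nat \<Rightarrow> obj \<Rightarrow> obj" where
  "tau2 n X = obj n (fst X - 2) (snd X)"

definition tmap :: "nat \<Rightarrow> obj \<Rightarrow> obj \<Rightarrow> 'k::field mat \<Rightarrow> bool" where
  "tmap n X Y M \<longleftrightarrow>
     (\<forall>i j. (snd Y \<le> i \<or> snd X \<le> j) \<longrightarrow> M i j = 0) \<and>
     (\<forall>i j. M i j \<noteq> 0 \<longrightarrow> (fst Y + int i) mod int n = (fst X + int j) mod int n) \<and>
     (\<forall>i<snd Y. \<forall>j<snd X. M (Suc i) j = (if j = 0 then 0 else M i (j - 1)))"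

definition homT :: "nat \<Rightarrow> obj \<Rightarrow> obj \<Rightarrow> 'k::field mat set" where
  "homT n X Y = {M. tmap n X Y M}"

definition mmul :: "nat \<Rightarrow> 'k::field mat \<Rightarrow> 'k mat \<Rightarrow> 'k mat" where
  "mmul m G F = (\<lambda>i j. \<Sum>k<m. G i k * F k j)"

definition zero_mat :: "'k::field mat" where
  "zero_mat = (\<lambda>i j. 0)"

text \<open>D-maps X -> Y: elements of Hom_D(X, tau^-1 Y[1]) = D Hom_T(Y, tau^2 X),
  i.e. linear functionals on homT n Y (tau2 n X) (values off that space are
  irrelevant).\<close>
definition dmap :: "nat \<Rightarrow> obj \<Rightarrow> obj \<Rightarrow> ('k::field mat \<Rightarrow> 'k) \<Rightarrow> bool" where
  "dmap n X Y \<phi> \<longleftrightarrow>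
     (\<forall>M\<in>homT n Y (tau2 n X). \<forall>M'\<in>homT n Y (tau2 n X).
        \<phi> (\<lambda>i j. M i j + M' i j) = \<phi> M + \<phi> M') \<and>
     (\<forall>M\<in>homT n Y (tau2 n X). \<forall>c. \<phi> (\<lambda>i j. c * M i j) = c * \<phi> M)"

definition dmap_nonzero :: "nat \<Rightarrow> obj \<Rightarrow> obj \<Rightarrow> ('k::field mat \<Rightarrow> 'k) \<Rightarrow> bool" where
  "dmap_nonzero n X Y \<phi> \<longleftrightarrow> dmap n X Y \<phi> \<and> (\<exists>M\<in>homT n Y (tau2 n X). \<phi> M \<noteq> 0)"

definition dmap_eq :: "nat \<Rightarrow> obj \<Rightarrow> obj \<Rightarrow> ('k::field mat \<Rightarrow> 'k) \<Rightarrow> ('k mat \<Rightarrow> 'k) \<Rightarrow> bool" where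
  "dmap_eq n X Y \<phi> \<psi> \<longleftrightarrow> (\<forall>M\<in>homT n Y (tau2 n X). \<phi> M = \<psi> M)"

text \<open>Composite g o d o f of T-maps f : X' -> X, g : Y -> Y' with a D-map
  d : X -> Y (Serre/AR duality is natural): the functional on
  Hom_T(Y', tau^2 X') given by h |-> d((tau^2 f) o h o g).\<close>
definition dcomp :: "obj \<Rightarrow> obj \<Rightarrow> 'k::field mat \<Rightarrow> ('k mat \<Rightarrow> 'k) \<Rightarrow> 'k mat \<Rightarrow> ('k mat \<Rightarrow> 'k)" where
  "dcomp X' Y' F d G = (\<lambda>H. d (mmul (snd Y') (mmul (snd X') F H) G))"

definition has_nonzero_tmap :: "nat \<Rightarrow> obj \<Rightarrow> obj \<Rightarrow> 'k::field itself \<Rightarrow> bool" where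
  "has_nonzero_tmap n X Y (_::'k itself) \<longleftrightarrow> (\<exists>M::'k mat. tmap n X Y M \<and> M \<noteq> zero_mat)"

definition wing :: "nat \<Rightarrow> obj \<Rightarrow> obj set" where
  "wing n X = {obj n (fst X + int s) i' | s i'. 1 \<le> i' \<and> s + i' \<le> snd X}"

definition left_edge :: "nat \<Rightarrow> obj \<Rightarrow> obj set" where
  "left_edge n X = {obj n (fst X) i' | i'. 1 \<le> i' \<and> i' \<le> snd X}"

definition right_edge :: "nat \<Rightarrow> obj \<Rightarrow> obj set" where
  "right_edge n X = {obj n (fst X + int (snd X) - int i') i' | i'. 1 \<le> i' \<and> i' \<le> snd X}"

definition alg_closed_type :: "'k::field itself \<Rightarrow> bool" where
  "alg_closed_type _ \<longleftrightarrow> (\<forall>p::'k poly. 1 \<le> degree p \<longrightarrow> (\<exists>x. poly p x = 0))"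

end

theory Submission
  imports Defs
begin


definition dg :: "nat \<Rightarrow> nat \<Rightarrow> nat \<Rightarrow> 'k::field mat" where
  "dg r c k = (\<lambda>i j. if i < r \<and> j < c \<and> j = i + k then 1 else 0)"

lemma tmap_shape:
  assumes "tmap n X Y M"
  shows "M i j = (if i \<le> j \<and> j < snd X \<and> i < snd Y then M 0 (j - i) else 0)"
proof (induction i arbitrary: j)
  case 0 then show ?case using assms unfolding tmap_def by auto
next
  case (Suc i)
  show ?case
  proof (cases "Suc i < snd Y \<and> j < snd X")
    case True
    then have "M (Suc i) j = (if j = 0 then 0 else M i (j - 1))" using assms unfolding tmap_def by auto
    then show ?thesis using Suc.IH[of "j-1"] True by (auto simp: Suc_le_eq)
  next
    case False then show ?thesis using assms unfolding tmap_def by auto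
  qed
qed

lemma tmap_low:
  assumes t: "tmap n X Y M" and k: "k + snd Y < snd X"
  shows "M 0 k = 0"
proof (cases "snd Y = 0")
  case True then show ?thesis using t unfolding tmap_def by auto
next
  case False
  define i where "i = snd Y - 1"
  define j where "j = k + snd Y"
  have op: "\<forall>i<snd Y. \<forall>j<snd X. M (Suc i) j = (if j = 0 then 0 else M i (j - 1))"
    using t unfolding tmap_def by blast
  have "i < snd Y" "j < snd X" using False k unfolding i_def j_def by auto
  then have "M (Suc i) j = (if j = 0 then 0 else M i (j - 1))" using op by blast
  moreover have "M (Suc i) j = 0" using t False unfolding tmap_def i_def by auto
  ultimately have "M i (j - 1) = 0" using False j_def by auto
  moreover have "M i (j - 1) = M 0 k" using tmap_shape[OF t, of i "j - 1"] False k
    unfolding i_def j_def by auto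
  ultimately show ?thesis by simp
qed

lemma tmap_grad:
  assumes "tmap n X Y M" "M 0 k \<noteq> 0"
  shows "fst Y mod int n = (fst X + int k) mod int n"
  using assms unfolding tmap_def by (metis add.right_neutral of_nat_0)

lemma tmap_one_dim:
  assumes t: "tmap n X Y M"
   and u: "\<And>k. k < snd X \<Longrightarrow> snd X \<le> k + snd Y \<Longrightarrow> fst Y mod int n = (fst X + int k) mod int n \<Longrightarrow> k = k0"
  shows "M = (\<lambda>i j. M 0 k0 * dg (snd Y) (snd X) k0 i j)"
proof (intro ext)
  fix i j
  show "M i j = M 0 k0 * dg (snd Y) (snd X) k0 i j"
  proof (cases "i \<le> j \<and> j < snd X \<and> i < snd Y")
    case True
    show ?thesis
    proof (cases "M 0 (j - i) = 0")
      case z: True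
      then show ?thesis using tmap_shape[OF t, of i j] True by (auto simp: dg_def)
    next
      case nz: False
      have "snd X \<le> (j - i) + snd Y" using tmap_low[OF t, of "j-i"] nz by fastforce
      moreover have "fst Y mod int n = (fst X + int (j - i)) mod int n" using tmap_grad[OF t nz] .
      ultimately have "j - i = k0" using u True by auto
      then show ?thesis using tmap_shape[OF t, of i j] True by (auto simp: dg_def)
    qed
  next
    case False
    then show ?thesis using tmap_shape[OF t, of i j] by (auto simp: dg_def)
  qed
qed

lemma tmap_zero:
  assumes t: "tmap n X Y M"
   and u: "\<And>k. k < snd X \<Longrightarrow> snd X \<le> k + snd Y \<Longrightarrow> fst Y mod int n = (fst X + int k) mod int n \<Longrightarrow> False"
  shows "M = zero_mat"
proof -
  have "M = (\<lambda>i j. M 0 (snd X) * dg (snd Y) (snd X) (snd X) i j)"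
    using tmap_one_dim[OF t, of "snd X"] u by blast
  moreover have "M 0 (snd X) = 0" using t unfolding tmap_def by auto
  ultimately show ?thesis by (simp add: zero_mat_def)
qed

lemma no_nonzero:
  assumes u: "\<And>k. k < snd X \<Longrightarrow> snd X \<le> k + snd Y \<Longrightarrow> fst Y mod int n = (fst X + int k) mod int n \<Longrightarrow> False"
  shows "\<not> has_nonzero_tmap n X Y TYPE('k::field)"
  unfolding has_nonzero_tmap_def using tmap_zero u by blast

lemma mod_shift:
  fixes A B N :: int
  assumes "A mod N = B mod N" shows "(A + i) mod N = (B + i) mod N"
  by (metis assms mod_add_left_eq)

lemma tmap_dg:
  assumes "k < snd X" "snd X \<le> k + snd Y" "fst Y mod int n = (fst X + int k) mod int n"
  shows "tmap n X Y (\<lambda>i j. x * dg (snd Y) (snd X) k i j)"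
  using assms mod_shift[OF assms(3), of "int i" for i] unfolding tmap_def dg_def by (auto simp: ac_simps)

lemma tmap_scale:
  assumes "tmap n X Y M" shows "tmap n X Y (\<lambda>i j. x * M i j)"
  using assms unfolding tmap_def by auto

lemma dmap_coord: "dmap n X Y (\<lambda>M. M i0 j0)"
  unfolding dmap_def by auto

lemma ex_dnz_iff:
  "(\<exists>u::'k::field mat \<Rightarrow> 'k. dmap_nonzero n X Y u) \<longleftrightarrow>
   (\<exists>k. k < snd Y \<and> snd Y \<le> k + snd (tau2 n X) \<and> fst (tau2 n X) mod int n = (fst Y + int k) mod int n)"
proof
  assume "\<exists>u::'k::field mat \<Rightarrow> 'k. dmap_nonzero n X Y u"
  then obtain u :: "'k mat \<Rightarrow> 'k" and M where d: "dmap n X Y u" and M: "M \<in> homT n Y (tau2 n X)" "u M \<noteq> 0"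
    unfolding dmap_nonzero_def by blast
  show "\<exists>k. k < snd Y \<and> snd Y \<le> k + snd (tau2 n X) \<and> fst (tau2 n X) mod int n = (fst Y + int k) mod int n"
  proof (rule ccontr)
    assume "\<not> ?thesis"
    then have "M = zero_mat" using tmap_zero[of n Y "tau2 n X" M] M unfolding homT_def by blast
    then have "M = (\<lambda>i j. 0 * M i j)" by (auto simp: zero_mat_def)
    then have "u M = 0 * u M" using d M unfolding dmap_def by metis
    then show False using M by simp
  qed
next
  assume "\<exists>k. k < snd Y \<and> snd Y \<le> k + snd (tau2 n X) \<and> fst (tau2 n X) mod int n = (fst Y + int k) mod int n"
  then obtain k where k: "k < snd Y" "snd Y \<le> k + snd (tau2 n X)" "fst (tau2 n X) mod int n = (fst Y + int k) mod int n" by blast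
  have "tmap n Y (tau2 n X) (\<lambda>i j. 1 * dg (snd (tau2 n X)) (snd Y) k i j :: 'k)" using tmap_dg[OF k] .
  moreover have "(\<lambda>i j. 1 * dg (snd (tau2 n X)) (snd Y) k i j :: 'k) 0 k = 1"
    using k by (auto simp: dg_def)
  ultimately show "\<exists>u::'k::field mat \<Rightarrow> 'k. dmap_nonzero n X Y u"
    unfolding dmap_nonzero_def homT_def using dmap_coord[of n X Y 0 k] by (intro exI[of _ "\<lambda>M. M 0 k"]) force
qed

lemma mmul_dg_left: "mmul m (dg r m k) B = (\<lambda>i j. if i < r \<and> i + k < m then B (i+k) j else 0)"
proof (intro ext)
  fix i j
  have "mmul m (dg r m k) B i j = (\<Sum>l<m. if l = i + k then (if i < r then B l j else 0) else 0)"
    unfolding mmul_def dg_def by (intro sum.cong) auto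
  also have "\<dots> = (if i < r \<and> i + k < m then B (i+k) j else 0)" by (simp add: sum.delta')
  finally show "mmul m (dg r m k) B i j = (if i < r \<and> i + k < m then B (i+k) j else 0)" .
qed

lemma mmul_dg_right: "mmul m A (dg m c k) = (\<lambda>i j. if j < c \<and> k \<le> j \<and> j - k < m then A i (j - k) else 0)"
proof (intro ext)
  fix i j
  have "mmul m A (dg m c k) i j = (\<Sum>l<m. if l = j - k then (if j < c \<and> k \<le> j then A i l else 0) else 0)"
    unfolding mmul_def dg_def by (intro sum.cong) auto
  also have "\<dots> = (if j < c \<and> k \<le> j \<and> j - k < m then A i (j - k) else 0)" by (simp add: sum.delta')
  finally show "mmul m A (dg m c k) i j = (if j < c \<and> k \<le> j \<and> j - k < m then A i (j - k) else 0)" .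
qed

lemma mmul_scale_left: "mmul m (\<lambda>i j. x * A i j) B = (\<lambda>i j. x * mmul m A B i j)"
  unfolding mmul_def by (auto simp: sum_distrib_left mult.assoc)

lemma mmul_scale_right: "mmul m A (\<lambda>i j. x * B i j) = (\<lambda>i j. x * mmul m A B i j)"
  unfolding mmul_def by (auto simp: sum_distrib_left mult.left_commute)

lemma modeq_small:
  fixes x y N :: int
  assumes "x mod N = y mod N" "- N < x - y" "x - y < N"
  shows "x = y"
proof -
  have "N dvd x - y" using assms(1) by (simp add: mod_eq_dvd_iff)
  then show ?thesis using assms dvd_imp_le_int[of "x - y" N] by (cases "x - y = 0") auto
qed



lemma factor_generic:
  fixes d u :: "'k::field mat \<Rightarrow> 'k"
  assumes uA: "\<And>k. k < snd Y' \<Longrightarrow> snd Y' \<le> k + snd (tau2 n X') \<Longrightarrow> fst (tau2 n X') mod int n = (fst Y' + int k) mod int n \<Longrightarrow> k = kA"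
   and tA: "tmap n Y' (tau2 n X') (\<lambda>i j. 1 * dg (snd (tau2 n X')) (snd Y') kA i j :: 'k)"
   and uB: "\<And>k. k < snd Y \<Longrightarrow> snd Y \<le> k + snd (tau2 n X) \<Longrightarrow> fst (tau2 n X) mod int n = (fst Y + int k) mod int n \<Longrightarrow> k = kB"
   and tB: "tmap n Y (tau2 n X) (\<lambda>i j. 1 * dg (snd (tau2 n X)) (snd Y) kB i j :: 'k)"
   and tF: "tmap n X' X (\<lambda>i j. 1 * dg (snd X) (snd X') kF i j :: 'k)"
   and tG: "tmap n Y Y' (\<lambda>i j. 1 * dg (snd Y') (snd Y) kG i j :: 'k)"
   and prod: "mmul (snd Y') (mmul (snd X') (dg (snd X) (snd X') kF) (dg (snd X') (snd Y') kA)) (dg (snd Y') (snd Y) kG) = (dg (snd X) (snd Y) kB :: 'k mat)"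
   and dnz: "dmap_nonzero n X Y d" and unz: "dmap_nonzero n X' Y' u"
  shows "\<exists>F G. tmap n X' X F \<and> tmap n Y Y' G \<and> dmap_eq n X' Y' u (dcomp X' Y' F d G)"
proof -
  have sX: "snd (tau2 n X) = snd X" "snd (tau2 n X') = snd X'" by (auto simp: tau2_def obj_def)
  define dgA :: "'k mat" where "dgA = dg (snd X') (snd Y') kA"
  define dgB :: "'k mat" where "dgB = dg (snd X) (snd Y) kB"
  have dgA_h: "dgA \<in> homT n Y' (tau2 n X')" using tA sX unfolding homT_def dgA_def by simp
  have dgB_h: "dgB \<in> homT n Y (tau2 n X)" using tB sX unfolding homT_def dgB_def by simp
  obtain M0 where M0: "M0 \<in> homT n Y (tau2 n X)" "d M0 \<noteq> 0" and dd: "dmap n X Y d"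
    using dnz unfolding dmap_nonzero_def by blast
  have uu: "dmap n X' Y' u" using unz unfolding dmap_nonzero_def by blast
  have "M0 = (\<lambda>i j. M0 0 kB * dgB i j)" using tmap_one_dim[of n Y "tau2 n X" M0 kB] M0(1) uB sX
    unfolding homT_def dgB_def by auto
  then have "d M0 = M0 0 kB * d dgB" using dd dgB_h unfolding dmap_def by metis
  then have dB: "d dgB \<noteq> 0" using M0 by auto
  define f where "f = u dgA / d dgB"
  define F where "F = (\<lambda>i j. f * dg (snd X) (snd X') kF i j :: 'k)"
  define G where "G = (\<lambda>i j. 1 * dg (snd Y') (snd Y) kG i j :: 'k)"
  have "tmap n X' X F" unfolding F_def using tmap_scale[OF tF, of f] by simp
  moreover have "tmap n Y Y' G" unfolding G_def using tG .
  moreover have "dmap_eq n X' Y' u (dcomp X' Y' F d G)"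
    unfolding dmap_eq_def
  proof
    fix H :: "'k mat" assume H: "H \<in> homT n Y' (tau2 n X')"
    define h where "h = H 0 kA"
    have Hf: "H = (\<lambda>i j. h * dgA i j)" using tmap_one_dim[of n Y' "tau2 n X'" H kA] H uA sX
      unfolding homT_def dgA_def h_def by auto
    have "u H = h * u dgA" using uu dgA_h Hf unfolding dmap_def by metis
    moreover have "dcomp X' Y' F d G H = d (\<lambda>i j. (f * h) * dgB i j)"
      unfolding dcomp_def F_def G_def Hf dgA_def dgB_def
      by (simp add: mmul_scale_left mmul_scale_right prod mult.assoc)
    moreover have "d (\<lambda>i j. (f * h) * dgB i j) = (f * h) * d dgB" using dd dgB_h unfolding dmap_def by blast
    ultimately show "u H = dcomp X' Y' F d G H" using dB unfolding f_def by (simp add: field_simps)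
  qed
  ultimately show ?thesis by blast
qed



lemma mq: "((x::int) mod N) mod N = (y mod N + int k) mod N \<longleftrightarrow> x mod N = (y + int k) mod N"
  by (simp add: mod_add_left_eq)

lemma mq2: "((x::int) mod N + u - v) mod N = (x + u - v) mod N"
  by (metis mod_add_left_eq add_diff_eq)

theorem lemma2p2:
  fixes n :: nat and a :: int and b c :: nat
  assumes kclosed: "alg_closed_type TYPE('k::field)"
    and n2: "2 \<le> n"
    and b3: "3 \<le> b" and bn: "b \<le> n - 1"
    and c1: "1 \<le> c" and cb: "c \<le> b - 2"
  defines "X \<equiv> obj n a b"
    and "Y \<equiv> obj n a c"
    and "Z \<equiv> obj n (a + int c + 1) (b - c - 1)"
  assumes Y'_in: "Y' \<in> wing n Y" and Z'_in: "Z' \<in> wing n Z"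
  shows
    "\<not> has_nonzero_tmap n Z' Y' TYPE('k)
     \<and> \<not> has_nonzero_tmap n Y' Z' TYPE('k)
     \<and> ((\<exists>u::'k mat \<Rightarrow> 'k. dmap_nonzero n Z' Y' u)
          \<longleftrightarrow> Z' \<in> left_edge n Z \<and> Y' \<in> right_edge n Y)
     \<and> ((\<exists>u::'k mat \<Rightarrow> 'k. dmap_nonzero n Z' Y' u) \<longrightarrow>
          (\<exists>d::'k mat \<Rightarrow> 'k. dmap_nonzero n Z Y d) \<and>
          (\<forall>(d::'k mat \<Rightarrow> 'k) (u::'k mat \<Rightarrow> 'k). dmap_nonzero n Z Y d \<longrightarrow> dmap_nonzero n Z' Y' u \<longrightarrow>
             (\<exists>F G. tmap n Z' Z F \<and> tmap n Y Y' G \<and>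
                    dmap_eq n Z' Y' u (dcomp Z' Y' F d G))))
     \<and> ((\<exists>u::'k mat \<Rightarrow> 'k. dmap_nonzero n Y' Z' u)
          \<longleftrightarrow> Z' \<in> right_edge n Z \<and> Y' \<in> left_edge n Y \<and> ql X = n - 1)
     \<and> ((\<exists>u::'k mat \<Rightarrow> 'k. dmap_nonzero n Y' Z' u) \<longrightarrow>
          (\<exists>e::'k mat \<Rightarrow> 'k. dmap_nonzero n X X e) \<and>
          (\<forall>(e::'k mat \<Rightarrow> 'k) (u::'k mat \<Rightarrow> 'k). dmap_nonzero n X X e \<longrightarrow> dmap_nonzero n Y' Z' u \<longrightarrow>
             (\<exists>F G. tmap n Y' X F \<and> tmap n X Z' G \<and>
                    dmap_eq n Y' Z' u (dcomp Y' Z' F e G))))"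
proof -
  have Npos: "0 < int n" using n2 by simp
  have ibc: "int (b - c - 1) = int b - int c - 1" using cb b3 by auto
  have ibn: "int b \<le> int n - 1" using bn n2 by auto
  obtain s p where Y'e: "Y' = obj n (fst Y + int s) p" and p1: "1 \<le> p" and sp: "s + p \<le> c"
    using Y'_in unfolding wing_def Y_def obj_def by auto
  obtain t q where Z'e: "Z' = obj n (fst Z + int t) q" and q1: "1 \<le> q" and tq: "t + q \<le> b - c - 1"
    using Z'_in unfolding wing_def Z_def obj_def by auto
  have tq': "int t + int q \<le> int b - int c - 1" using tq ibc by linarith
  have fX: "fst X = a mod int n" "snd X = b" unfolding X_def obj_def by auto
  have fY: "fst Y = a mod int n" "snd Y = c" unfolding Y_def obj_def by auto
  have fZ: "fst Z = (a + int c + 1) mod int n" "snd Z = b - c - 1" unfolding Z_def obj_def by auto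
  have fY': "fst Y' = (a + int s) mod int n" "snd Y' = p" unfolding Y'e fY obj_def by (auto simp: mod_add_left_eq)
  have fZ': "fst Z' = (a + int c + 1 + int t) mod int n" "snd Z' = q" unfolding Z'e fZ obj_def by (auto simp: mod_add_left_eq)
  have fTX: "fst (tau2 n X) = (a - 2) mod int n" "snd (tau2 n X) = b" unfolding tau2_def fX obj_def by (auto simp: mod_diff_left_eq)
  have fTZ: "fst (tau2 n Z) = (a + int c + 1 - 2) mod int n" "snd (tau2 n Z) = b - c - 1" unfolding tau2_def fZ obj_def by (auto simp: mod_diff_left_eq)
  have fTY': "fst (tau2 n Y') = (a + int s - 2) mod int n" "snd (tau2 n Y') = p" unfolding tau2_def fY' obj_def by (auto simp: mod_diff_left_eq)
  have fTZ': "fst (tau2 n Z') = (a + int c + 1 + int t - 2) mod int n" "snd (tau2 n Z') = q" unfolding tau2_def fZ' obj_def by (auto simp: mod_diff_left_eq)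
  note facts = fX fY fZ fY' fZ' fTX fTZ fTY' fTZ' mq mod_add_left_eq

  have i: "\<not> has_nonzero_tmap n Z' Y' TYPE('k)"
  proof (rule no_nonzero)
    fix k assume k: "k < snd Z'" "snd Z' \<le> k + snd Y'" "fst Y' mod int n = (fst Z' + int k) mod int n"
    then have "(a + int s) mod int n = (a + int c + 1 + int t + int k) mod int n" by (simp add: facts)
    then have "a + int s = a + int c + 1 + int t + int k"
      by (rule modeq_small) (use k sp tq' ibn in \<open>simp_all add: facts\<close>)
    then show False using sp by linarith
  qed
  have ii: "\<not> has_nonzero_tmap n Y' Z' TYPE('k)"
  proof (rule no_nonzero)
    fix k assume k: "k < snd Y'" "snd Y' \<le> k + snd Z'" "fst Z' mod int n = (fst Y' + int k) mod int n"
    then have "(a + int c + 1 + int t) mod int n = (a + int s + int k) mod int n" by (simp add: facts)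
    then have "a + int c + 1 + int t = a + int s + int k"
      by (rule modeq_small) (use k sp tq' ibn in \<open>simp_all add: facts\<close>)
    then show False using sp k by (simp add: facts)
  qed

  have cA: "(k < snd Y' \<and> snd Y' \<le> k + snd (tau2 n Z') \<and> fst (tau2 n Z') mod int n = (fst Y' + int k) mod int n)
     \<longleftrightarrow> (t = 0 \<and> s + p = c \<and> k = p - 1)" for k
  proof
    assume k: "k < snd Y' \<and> snd Y' \<le> k + snd (tau2 n Z') \<and> fst (tau2 n Z') mod int n = (fst Y' + int k) mod int n"
    then have "(a + int c + 1 + int t - 2) mod int n = (a + int s + int k) mod int n" by (simp add: facts)
    then have "a + int c + 1 + int t - 2 = a + int s + int k"
      by (rule modeq_small) (use k sp tq' ibn in \<open>simp_all add: facts\<close>)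
    then show "t = 0 \<and> s + p = c \<and> k = p - 1" using sp k p1 by (simp add: facts) linarith
  next
    assume h: "t = 0 \<and> s + p = c \<and> k = p - 1"
    then have "int s + int k = int c - 1" using p1 by auto
    then have e: "a + int c + 1 + int t - 2 = a + int s + int k" using h by simp
    have m: "fst (tau2 n Z') mod int n = (fst Y' + int k) mod int n"
      unfolding fY' fTZ' mod_add_left_eq mod_mod_trivial e by simp
    have "k < p" "p \<le> k + q" using h p1 q1 by auto
    then show "k < snd Y' \<and> snd Y' \<le> k + snd (tau2 n Z') \<and> fst (tau2 n Z') mod int n = (fst Y' + int k) mod int n"
      using m fY' fTZ' by simp
  qed
  have edge3: "(Z' \<in> left_edge n Z \<and> Y' \<in> right_edge n Y) \<longleftrightarrow> (t = 0 \<and> s + p = c)"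
  proof
    assume h: "Z' \<in> left_edge n Z \<and> Y' \<in> right_edge n Y"
    then obtain i' where "Z' = obj n (fst Z) i'" unfolding left_edge_def by auto
    then have "(a + int c + 1 + int t) mod int n = (a + int c + 1 + int 0) mod int n"
      using fZ' fZ unfolding obj_def by auto
    then have "a + int c + 1 + int t = a + int c + 1 + int 0"
      by (rule modeq_small) (use tq' ibn in \<open>simp_all\<close>)
    moreover
    obtain j' where j': "Y' = obj n (fst Y + int (snd Y) - int j') j'" using h unfolding right_edge_def by auto
    then have "j' = p" using fY' unfolding obj_def by auto
    then have "(a + int s) mod int n = (a + int c - int p) mod int n"
      using j' fY' fY unfolding obj_def by (auto simp: mq2)
    then have "a + int s = a + int c - int p"
      by (rule modeq_small) (use sp ibn cb in \<open>simp_all\<close>)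
    ultimately show "t = 0 \<and> s + p = c" by simp
  next
    assume h: "t = 0 \<and> s + p = c"
    have "Z' = obj n (fst Z) q" using h Z'e by simp
    then have "Z' \<in> left_edge n Z" unfolding left_edge_def using q1 tq fZ by auto
    have hh: "a mod int n + int c - int p = a mod int n + int s" using h by auto
    have "Y' = obj n (fst Y + int (snd Y) - int p) p" unfolding Y'e fY hh by simp
    then have "Y' \<in> right_edge n Y" unfolding right_edge_def using p1 sp fY by auto
    with \<open>Z' \<in> left_edge n Z\<close> show "Z' \<in> left_edge n Z \<and> Y' \<in> right_edge n Y" by simp
  qed
  have iii: "(\<exists>u::'k mat \<Rightarrow> 'k. dmap_nonzero n Z' Y' u) \<longleftrightarrow> Z' \<in> left_edge n Z \<and> Y' \<in> right_edge n Y"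
    unfolding ex_dnz_iff edge3 cA by auto
  have cB: "(k < snd Y \<and> snd Y \<le> k + snd (tau2 n Z) \<and> fst (tau2 n Z) mod int n = (fst Y + int k) mod int n)
     \<longleftrightarrow> k = c - 1" for k
  proof
    assume k: "k < snd Y \<and> snd Y \<le> k + snd (tau2 n Z) \<and> fst (tau2 n Z) mod int n = (fst Y + int k) mod int n"
    then have "(a + int c + 1 - 2) mod int n = (a + int k) mod int n" by (simp add: facts)
    then have "a + int c + 1 - 2 = a + int k"
      by (rule modeq_small) (use k ibn cb in \<open>simp_all add: facts\<close>)
    then show "k = c - 1" by simp
  next
    assume h: "k = c - 1"
    then have e: "a + int c + 1 - 2 = a + int k" using c1 by simp
    have m: "fst (tau2 n Z) mod int n = (fst Y + int k) mod int n"
      unfolding fY fTZ mod_add_left_eq mod_mod_trivial e by simp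
    have "k < c" "c \<le> k + (b - c - 1)" using h c1 cb b3 by auto
    then show "k < snd Y \<and> snd Y \<le> k + snd (tau2 n Z) \<and> fst (tau2 n Z) mod int n = (fst Y + int k) mod int n"
      using m fY fTZ by simp
  qed
  have iiif: "(\<exists>u::'k mat \<Rightarrow> 'k. dmap_nonzero n Z' Y' u) \<longrightarrow>
          (\<exists>d::'k mat \<Rightarrow> 'k. dmap_nonzero n Z Y d) \<and>
          (\<forall>(d::'k mat \<Rightarrow> 'k) (u::'k mat \<Rightarrow> 'k). dmap_nonzero n Z Y d \<longrightarrow> dmap_nonzero n Z' Y' u \<longrightarrow>
             (\<exists>F G. tmap n Z' Z F \<and> tmap n Y Y' G \<and>
                    dmap_eq n Z' Y' u (dcomp Z' Y' F d G)))"
  proof (intro impI conjI allI)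
    assume "\<exists>u::'k mat \<Rightarrow> 'k. dmap_nonzero n Z' Y' u"
    then have h: "t = 0" "s + p = c" using iii edge3 by auto
    show "\<exists>d::'k mat \<Rightarrow> 'k. dmap_nonzero n Z Y d" unfolding ex_dnz_iff using cB by blast
    fix d u :: "'k mat \<Rightarrow> 'k"
      assume dnz: "dmap_nonzero n Z Y d" and unz: "dmap_nonzero n Z' Y' u"
        have h1: "\<And>k. k < snd Y' \<Longrightarrow> snd Y' \<le> k + snd (tau2 n Z') \<Longrightarrow> fst (tau2 n Z') mod int n = (fst Y' + int k) mod int n \<Longrightarrow> k = p - 1"
          using cA by blast
        have h2: "tmap n Y' (tau2 n Z') (\<lambda>i j. 1 * dg (snd (tau2 n Z')) (snd Y') (p - 1) i j :: 'k)"
          by (rule tmap_dg) (use cA h in blast)+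
        have h3: "\<And>k. k < snd Y \<Longrightarrow> snd Y \<le> k + snd (tau2 n Z) \<Longrightarrow> fst (tau2 n Z) mod int n = (fst Y + int k) mod int n \<Longrightarrow> k = c - 1"
          using cB by blast
        have h4: "tmap n Y (tau2 n Z) (\<lambda>i j. 1 * dg (snd (tau2 n Z)) (snd Y) (c - 1) i j :: 'k)"
          by (rule tmap_dg) (use cB in blast)+
        have h5: "tmap n Z' Z (\<lambda>i j. 1 * dg (snd Z) (snd Z') 0 i j :: 'k)"
          by (rule tmap_dg) (use h q1 tq in \<open>simp_all add: fZ fZ'\<close>)
        have e: "a + int c - int p = a + int s" using h by auto
        have h6: "tmap n Y Y' (\<lambda>i j. 1 * dg (snd Y') (snd Y) (c - p) i j :: 'k)"
          by (rule tmap_dg) (use h p1 e in \<open>simp_all add: fY fY' mod_add_left_eq of_nat_diff\<close>)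
        have h7: "mmul (snd Y') (mmul (snd Z') (dg (snd Z) (snd Z') 0) (dg (snd Z') (snd Y') (p - 1))) (dg (snd Y') (snd Y) (c - p)) = (dg (snd Z) (snd Y) (c - 1) :: 'k mat)"
          using h p1 q1 tq c1 unfolding fY fY' fZ fZ' unfolding mmul_dg_left mmul_dg_right by (auto simp: dg_def intro!: ext)

        show "\<exists>F G. tmap n Z' Z F \<and> tmap n Y Y' G \<and> dmap_eq n Z' Y' u (dcomp Z' Y' F d G)"
          by (rule factor_generic[OF h1 h2 h3 h4 h5 h6 h7 dnz unz])
  qed
  have cC: "(k < snd Z' \<and> snd Z' \<le> k + snd (tau2 n Y') \<and> fst (tau2 n Y') mod int n = (fst Z' + int k) mod int n)
     \<longleftrightarrow> (s = 0 \<and> t + q = b - c - 1 \<and> b = n - 1 \<and> k = q - 1)" for k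
  proof
    assume k: "k < snd Z' \<and> snd Z' \<le> k + snd (tau2 n Y') \<and> fst (tau2 n Y') mod int n = (fst Z' + int k) mod int n"
    then have "(a + int s - 2) mod int n = (a + int c + 1 + int t + int k) mod int n" by (simp add: facts)
    then have "(a + int s - 2 + int n) mod int n = (a + int c + 1 + int t + int k) mod int n" by simp
    then have "a + int s - 2 + int n = a + int c + 1 + int t + int k"
      by (rule modeq_small) (use k sp tq' ibn cb in \<open>simp_all add: facts\<close>)
    then show "s = 0 \<and> t + q = b - c - 1 \<and> b = n - 1 \<and> k = q - 1" using sp k tq' ibn ibc tq by (simp add: facts) linarith
  next
    assume h: "s = 0 \<and> t + q = b - c - 1 \<and> b = n - 1 \<and> k = q - 1"
    then have "int t + int q = int b - int c - 1" "int b = int n - 1" "int k = int q - 1" using ibc q1 n2 by auto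
    then have e: "a + int s - 2 + int n = a + int c + 1 + int t + int k" using h by simp
    have m: "fst (tau2 n Y') mod int n = (fst Z' + int k) mod int n"
      unfolding fZ' fTY' mod_add_left_eq mod_mod_trivial e[symmetric] by simp
    have "k < q" "q \<le> k + p" using h p1 q1 by auto
    then show "k < snd Z' \<and> snd Z' \<le> k + snd (tau2 n Y') \<and> fst (tau2 n Y') mod int n = (fst Z' + int k) mod int n"
      using m fZ' fTY' by simp
  qed
  have edge4: "(Z' \<in> right_edge n Z \<and> Y' \<in> left_edge n Y \<and> ql X = n - 1) \<longleftrightarrow> (t + q = b - c - 1 \<and> s = 0 \<and> b = n - 1)"
  proof
    assume h: "Z' \<in> right_edge n Z \<and> Y' \<in> left_edge n Y \<and> ql X = n - 1"
    then obtain i' where "Y' = obj n (fst Y) i'" unfolding left_edge_def by auto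
    then have "(a + int s) mod int n = (a + int 0) mod int n"
      using fY' fY unfolding obj_def by auto
    then have "a + int s = a + int 0"
      by (rule modeq_small) (use sp ibn cb in \<open>simp_all\<close>)
    moreover
    obtain j' where j': "Z' = obj n (fst Z + int (snd Z) - int j') j'" using h unfolding right_edge_def by auto
    then have "j' = q" using fZ' unfolding obj_def by auto
    then have "(a + int c + 1 + int t) mod int n = (a + int c + 1 + int (b - c - 1) - int q) mod int n"
      using j' fZ' fZ unfolding obj_def by (auto simp: mq2)
    then have "a + int c + 1 + int t = a + int c + 1 + int (b - c - 1) - int q"
      by (rule modeq_small) (use tq' ibn ibc q1 in \<open>simp_all\<close>)
    moreover have "b = n - 1" using h fX unfolding ql_def by simp
    ultimately show "t + q = b - c - 1 \<and> s = 0 \<and> b = n - 1" using ibc by linarith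
  next
    assume h: "t + q = b - c - 1 \<and> s = 0 \<and> b = n - 1"
    have "Y' = obj n (fst Y) p" using h Y'e by simp
    then have "Y' \<in> left_edge n Y" unfolding left_edge_def using p1 sp fY by auto
    have hh: "(a + int c + 1) mod int n + int (b - c - 1) - int q = (a + int c + 1) mod int n + int t" using h by auto
    have "Z' = obj n (fst Z + int (snd Z) - int q) q" unfolding Z'e fZ hh by simp
    then have "Z' \<in> right_edge n Z" unfolding right_edge_def using q1 tq fZ by auto
    with \<open>Y' \<in> left_edge n Y\<close> show "Z' \<in> right_edge n Z \<and> Y' \<in> left_edge n Y \<and> ql X = n - 1"
      using h fX unfolding ql_def by simp
  qed
  have iv: "(\<exists>u::'k mat \<Rightarrow> 'k. dmap_nonzero n Y' Z' u) \<longleftrightarrow> Z' \<in> right_edge n Z \<and> Y' \<in> left_edge n Y \<and> ql X = n - 1"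
    unfolding ex_dnz_iff edge4 cC by auto
  have ivf: "(\<exists>u::'k mat \<Rightarrow> 'k. dmap_nonzero n Y' Z' u) \<longrightarrow>
          (\<exists>e::'k mat \<Rightarrow> 'k. dmap_nonzero n X X e) \<and>
          (\<forall>(e::'k mat \<Rightarrow> 'k) (u::'k mat \<Rightarrow> 'k). dmap_nonzero n X X e \<longrightarrow> dmap_nonzero n Y' Z' u \<longrightarrow>
             (\<exists>F G. tmap n Y' X F \<and> tmap n X Z' G \<and>
                    dmap_eq n Y' Z' u (dcomp Y' Z' F e G)))"
  proof (intro impI conjI allI)
    assume "\<exists>u::'k mat \<Rightarrow> 'k. dmap_nonzero n Y' Z' u"
    then have h: "t + q = b - c - 1" "s = 0" "b = n - 1" using iv edge4 by auto
    have cD: "(k < snd X \<and> snd X \<le> k + snd (tau2 n X) \<and> fst (tau2 n X) mod int n = (fst X + int k) mod int n)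
       \<longleftrightarrow> k = b - 1" for k
    proof
      assume k: "k < snd X \<and> snd X \<le> k + snd (tau2 n X) \<and> fst (tau2 n X) mod int n = (fst X + int k) mod int n"
      then have "(a - 2) mod int n = (a + int k) mod int n" by (simp add: facts)
      then have "(a - 2 + int n) mod int n = (a + int k) mod int n" by simp
      then have "a - 2 + int n = a + int k"
        by (rule modeq_small) (use k ibn in \<open>simp_all add: facts\<close>)
      then show "k = b - 1" using h b3 by linarith
    next
      assume hk: "k = b - 1"
      then have "int k = int n - 2" using h b3 by auto
      then have e: "a - 2 + int n = a + int k" by simp
      have m: "fst (tau2 n X) mod int n = (fst X + int k) mod int n"
        unfolding fX fTX mod_add_left_eq mod_mod_trivial e[symmetric] by simp
      have "k < b" "b \<le> k + b" using hk b3 by auto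
      then show "k < snd X \<and> snd X \<le> k + snd (tau2 n X) \<and> fst (tau2 n X) mod int n = (fst X + int k) mod int n"
        using m fX fTX by simp
    qed
    show "\<exists>e::'k mat \<Rightarrow> 'k. dmap_nonzero n X X e" unfolding ex_dnz_iff using cD by blast
    fix e u :: "'k mat \<Rightarrow> 'k"
    assume dnz: "dmap_nonzero n X X e" and unz: "dmap_nonzero n Y' Z' u"
    have h1: "\<And>k. k < snd Z' \<Longrightarrow> snd Z' \<le> k + snd (tau2 n Y') \<Longrightarrow> fst (tau2 n Y') mod int n = (fst Z' + int k) mod int n \<Longrightarrow> k = q - 1"
      using cC by blast
    have h2: "tmap n Z' (tau2 n Y') (\<lambda>i j. 1 * dg (snd (tau2 n Y')) (snd Z') (q - 1) i j :: 'k)"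
      by (rule tmap_dg) (use cC h in blast)+
    have h3: "\<And>k. k < snd X \<Longrightarrow> snd X \<le> k + snd (tau2 n X) \<Longrightarrow> fst (tau2 n X) mod int n = (fst X + int k) mod int n \<Longrightarrow> k = b - 1"
      using cD by blast
    have h4: "tmap n X (tau2 n X) (\<lambda>i j. 1 * dg (snd (tau2 n X)) (snd X) (b - 1) i j :: 'k)"
      by (rule tmap_dg) (use cD in blast)+
    have h5: "tmap n Y' X (\<lambda>i j. 1 * dg (snd X) (snd Y') 0 i j :: 'k)"
      by (rule tmap_dg) (use h p1 sp cb in \<open>simp_all add: fX fY'\<close>)
    have e: "a + int c + 1 + int t = a + int (b - q)" using h ibc tq by auto
    have h6: "tmap n X Z' (\<lambda>i j. 1 * dg (snd Z') (snd X) (b - q) i j :: 'k)"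
    proof (rule tmap_dg)
      show "fst Z' mod int n = (fst X + int (b - q)) mod int n"
        unfolding fX fZ' mod_add_left_eq mod_mod_trivial e by simp
    qed (use h q1 tq in \<open>simp_all add: fX fZ'\<close>)
    have h7: "mmul (snd Z') (mmul (snd Y') (dg (snd X) (snd Y') 0) (dg (snd Y') (snd Z') (q - 1))) (dg (snd Z') (snd X) (b - q)) = (dg (snd X) (snd X) (b - 1) :: 'k mat)"
    proof -
      have qb: "q \<le> b" using tq by linarith
      show ?thesis unfolding fX fY' fZ' unfolding mmul_dg_left mmul_dg_right
        using p1 q1 qb by (intro ext) (auto simp: dg_def)
    qed
    show "\<exists>F G. tmap n Y' X F \<and> tmap n X Z' G \<and> dmap_eq n Y' Z' u (dcomp Y' Z' F e G)"
      by (rule factor_generic[OF h1 h2 h3 h4 h5 h6 h7 dnz unz])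
  qed
  show ?thesis using i ii iii iiif iv ivf by blast
qed
end
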